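(* Let $G$ be a regular CERS and $S$ a resonant set of $G$. Then there exists a perfect matching $M$ of $G$ such that for every face $F\in S$ there is the $M$-link from $F$ to every inner face adjacent to $F$.
   Context: A CERS (catacondensed even ring system) is a simple bipartite 2-connected plane graph with all interior vertices of degree 3 and all boundary vertices of degree 2 or 3, whose inner dual (graph on inner faces, adjacent iff sharing an edge) is a tree. If $F,F'$ are adjacent inner faces, the two edges on the boundary of $F$ having exactly one vertex on the boundary of $F'$ form the link from $F$ to $F'$; for a perfect matching $M$, if both these edges lie in $M$ we say there is the $M$-link from $F$ to $F'$. For inner faces $F,F',F''$ with $F,F'$ sharing edge $e$ and $F',F''$ sharing edge $f$ ($F\ne F''$), the adjacent triple $(F,F',F'')$ is regular if $d_G(e,f)$ (distance in the line graph of $G$) is even. A CERS is regular if it has at most two inner faces or all adjacent triples are regular. An inner face is $M$-alternating if its edges alternate in and out of $M$. A set $S$ of pairwise disjoint inner faces is a resonant set if some perfect matching $M$ makes every face of $S$ $M$-alternating. *)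

theory Defs
  imports Main
begin

text \<open>Combinatorial model of a 2-connected plane graph: vertices V, edges E (2-element
sets), inner faces FI and outer face Fo, each face given by its set of boundary edges
(which must be a cycle). Planarity is encoded combinatorially: every edge lies on exactly
two faces, the faces around each vertex form a single cyclic fan, the graph is connected
and Euler's formula holds, so gluing the faces yields a sphere.\<close>

definition cyc_edge :: "'a list \<Rightarrow> nat \<Rightarrow> 'a set" where
  "cyc_edge vs i = {vs ! (i mod length vs), vs ! (Suc i mod length vs)}"

definition cycle_edges :: "'a list \<Rightarrow> 'a set set" where
  "cycle_edges vs = {cyc_edge vs i | i. i < length vs}"

definition is_cycle_in :: "'a set set \<Rightarrow> 'a set set \<Rightarrow> bool" where
  "is_cycle_in E C \<longleftrightarrow>
     (\<exists>vs. distinct vs \<and> 3 \<le> length vs \<and> C = cycle_edges vs) \<and> C \<subseteq> E"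

definition simple_graph :: "'a set \<Rightarrow> 'a set set \<Rightarrow> bool" where
  "simple_graph V E \<longleftrightarrow> finite V \<and>
     E \<subseteq> {{u, v} | u v. u \<in> V \<and> v \<in> V \<and> u \<noteq> v}"

definition connected_graph :: "'a set \<Rightarrow> 'a set set \<Rightarrow> bool" where
  "connected_graph V E \<longleftrightarrow> V \<noteq> {} \<and>
     (\<forall>u\<in>V. \<forall>v\<in>V. (\<lambda>x y. {x, y} \<in> E)\<^sup>*\<^sup>* u v)"

definition two_connected :: "'a set \<Rightarrow> 'a set set \<Rightarrow> bool" where
  "two_connected V E \<longleftrightarrow> 3 \<le> card V \<and> connected_graph V E \<and>
     (\<forall>x\<in>V. connected_graph (V - {x}) {e \<in> E. x \<notin> e})"

definition bipartite :: "'a set set \<Rightarrow> bool" where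
  "bipartite E \<longleftrightarrow> (\<exists>c :: 'a \<Rightarrow> bool. \<forall>u v. {u, v} \<in> E \<longrightarrow> c u \<noteq> c v)"

definition degree :: "'a set set \<Rightarrow> 'a \<Rightarrow> nat" where
  "degree E v = card {e \<in> E. v \<in> e}"

definition faces_at :: "'a set set set \<Rightarrow> 'a \<Rightarrow> 'a set set set" where
  "faces_at Fs v = {C \<in> Fs. v \<in> \<Union>C}"

definition plane_graph :: "'a set \<Rightarrow> 'a set set \<Rightarrow> 'a set set set \<Rightarrow> 'a set set \<Rightarrow> bool" where
  "plane_graph V E FI Fo \<longleftrightarrow>
     simple_graph V E \<and> finite FI \<and> Fo \<notin> FI \<and>
     (\<forall>C \<in> insert Fo FI. is_cycle_in E C) \<and>
     (\<forall>e\<in>E. card {C \<in> insert Fo FI. e \<in> C} = 2) \<and>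
     (\<forall>v\<in>V. faces_at (insert Fo FI) v \<noteq> {} \<and>
        (\<forall>C\<in>faces_at (insert Fo FI) v. \<forall>D\<in>faces_at (insert Fo FI) v.
           (\<lambda>X Y. X \<in> insert Fo FI \<and> Y \<in> insert Fo FI \<and> (\<exists>e\<in>X \<inter> Y. v \<in> e))\<^sup>*\<^sup>* C D)) \<and>
     connected_graph V E \<and>
     card V + (card FI + 1) = card E + 2"

definition dual_adj :: "'a set set set \<Rightarrow> 'a set set \<Rightarrow> 'a set set \<Rightarrow> bool" where
  "dual_adj FI C D \<longleftrightarrow> C \<in> FI \<and> D \<in> FI \<and> C \<noteq> D \<and> C \<inter> D \<noteq> {}"

definition inner_dual_tree :: "'a set set set \<Rightarrow> bool" where
  "inner_dual_tree FI \<longleftrightarrow> FI \<noteq> {} \<and>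
     (\<forall>C\<in>FI. \<forall>D\<in>FI. (dual_adj FI)\<^sup>*\<^sup>* C D) \<and>
     card {{C, D} | C D. dual_adj FI C D} + 1 = card FI"

definition CERS :: "'a set \<Rightarrow> 'a set set \<Rightarrow> 'a set set set \<Rightarrow> 'a set set \<Rightarrow> bool" where
  "CERS V E FI Fo \<longleftrightarrow>
     plane_graph V E FI Fo \<and> bipartite E \<and> two_connected V E \<and>
     (\<forall>v\<in>V. v \<notin> \<Union>Fo \<longrightarrow> degree E v = 3) \<and>
     (\<forall>v\<in>V. v \<in> \<Union>Fo \<longrightarrow> degree E v = 2 \<or> degree E v = 3) \<and>
     inner_dual_tree FI"

definition line_dist :: "'a set set \<Rightarrow> 'a set \<Rightarrow> 'a set \<Rightarrow> nat" where
  "line_dist E e f = (LEAST n. \<exists>es. length es = Suc n \<and> hd es = e \<and> last es = f \<and>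
      set es \<subseteq> E \<and> (\<forall>i<n. es ! i \<noteq> es ! Suc i \<and> es ! i \<inter> es ! Suc i \<noteq> {}))"

definition regular_CERS :: "'a set \<Rightarrow> 'a set set \<Rightarrow> 'a set set set \<Rightarrow> 'a set set \<Rightarrow> bool" where
  "regular_CERS V E FI Fo \<longleftrightarrow> CERS V E FI Fo \<and>
     (card FI \<le> 2 \<or>
      (\<forall>F F' F'' e f. F \<in> FI \<longrightarrow> F' \<in> FI \<longrightarrow> F'' \<in> FI \<longrightarrow>
          F \<noteq> F' \<longrightarrow> F' \<noteq> F'' \<longrightarrow> F \<noteq> F'' \<longrightarrow>
          e \<in> F \<inter> F' \<longrightarrow> f \<in> F' \<inter> F'' \<longrightarrow> even (line_dist E e f)))"

definition perfect_matching :: "'a set \<Rightarrow> 'a set set \<Rightarrow> 'a set set \<Rightarrow> bool" where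
  "perfect_matching V E M \<longleftrightarrow> M \<subseteq> E \<and> (\<forall>v\<in>V. \<exists>!e. e \<in> M \<and> v \<in> e)"

definition M_alternating :: "'a set set \<Rightarrow> 'a set set \<Rightarrow> bool" where
  "M_alternating M C \<longleftrightarrow> (\<exists>vs. distinct vs \<and> 3 \<le> length vs \<and> cycle_edges vs = C \<and>
     (\<forall>i<length vs. cyc_edge vs i \<in> M \<longleftrightarrow> cyc_edge vs (Suc i) \<notin> M))"

definition resonant_set :: "'a set \<Rightarrow> 'a set set \<Rightarrow> 'a set set set \<Rightarrow> 'a set set set \<Rightarrow> bool" where
  "resonant_set V E FI S \<longleftrightarrow> S \<subseteq> FI \<and>
     (\<forall>C\<in>S. \<forall>D\<in>S. C \<noteq> D \<longrightarrow> \<Union>C \<inter> \<Union>D = {}) \<and>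
     (\<exists>M. perfect_matching V E M \<and> (\<forall>C\<in>S. M_alternating M C))"

definition link :: "'a set set \<Rightarrow> 'a set set \<Rightarrow> 'a set set" where
  "link F F' = {e \<in> F. card (e \<inter> \<Union>F') = 1}"

definition M_link :: "'a set set \<Rightarrow> 'a set set \<Rightarrow> 'a set set \<Rightarrow> bool" where
  "M_link M F F' \<longleftrightarrow> link F F' \<subseteq> M"

end

theory Submission
  imports Defs
begin

lemma cyc_edge_mod: "cyc_edge vs (i mod length vs) = cyc_edge vs i"
  by (simp add: cyc_edge_def mod_Suc_eq)

lemma cyc_edge_cong: "i mod length vs = j mod length vs \<Longrightarrow> cyc_edge vs i = cyc_edge vs j"
  by (metis cyc_edge_mod)

lemma mem_cyc_edge:
  assumes "distinct vs" "k < length vs"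
  shows "vs!k \<in> cyc_edge vs i \<longleftrightarrow> (i mod length vs = k \<or> Suc i mod length vs = k)"
proof -
  have n: "length vs > 0" using assms by auto
  have a: "vs!k = vs!(i mod length vs) \<longleftrightarrow> k = i mod length vs"
    using assms n nth_eq_iff_index_eq by (metis mod_less_divisor)
  have b: "vs!k = vs!(Suc i mod length vs) \<longleftrightarrow> k = Suc i mod length vs"
    using assms n nth_eq_iff_index_eq by (metis mod_less_divisor)
  show ?thesis unfolding cyc_edge_def using a b by auto
qed

lemma cyc_edge_sub: "vs \<noteq> [] \<Longrightarrow> cyc_edge vs i \<subseteq> set vs"
  by (simp add: cyc_edge_def)

lemma cyc_edge_in: "vs \<noteq> [] \<Longrightarrow> cyc_edge vs i \<in> cycle_edges vs"
  unfolding cycle_edges_def by (metis (mono_tags, lifting) cyc_edge_mod length_greater_0_conv mem_Collect_eq mod_less_divisor)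

lemma Union_cycle_edges: "vs \<noteq> [] \<Longrightarrow> \<Union>(cycle_edges vs) = set vs"
proof
  assume "vs \<noteq> []"
  then show "\<Union>(cycle_edges vs) \<subseteq> set vs" unfolding cycle_edges_def using cyc_edge_sub by blast
  show "set vs \<subseteq> \<Union>(cycle_edges vs)"
  proof
    fix x assume "x \<in> set vs"
    then obtain k where k: "k < length vs" "x = vs!k" by (metis in_set_conv_nth)
    then have "x \<in> cyc_edge vs k" by (simp add: cyc_edge_def)
    then show "x \<in> \<Union>(cycle_edges vs)" using k unfolding cycle_edges_def by blast
  qed
qed

lemma cyc_edge_inj:
  assumes "distinct vs" "3 \<le> length vs" "a < length vs" "b < length vs"
    "cyc_edge vs a = cyc_edge vs b"
  shows "a = b"
proof (rule ccontr)
  assume ne: "a \<noteq> b"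
  let ?n = "length vs"
  have "vs!a \<in> cyc_edge vs a" using assms(3) by (simp add: cyc_edge_def)
  then have "vs!a \<in> cyc_edge vs b" using assms(5) by simp
  then have "b mod ?n = a \<or> Suc b mod ?n = a" using mem_cyc_edge[OF assms(1,3), of b] by blast
  then have 1: "Suc b mod ?n = a" using assms ne by auto
  have "vs!b \<in> cyc_edge vs b" using assms(4) by (simp add: cyc_edge_def)
  then have "vs!b \<in> cyc_edge vs a" using assms(5) by simp
  then have "a mod ?n = b \<or> Suc a mod ?n = b" using mem_cyc_edge[OF assms(1,4), of a] by blast
  then have 2: "Suc a mod ?n = b" using assms ne by auto
  show False using 1 2 assms(2,3,4) ne by (auto simp: mod_Suc split: if_splits)
qed

lemma card_cycle_edges:
  assumes "distinct vs" "3 \<le> length vs"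
  shows "card (cycle_edges vs) = length vs"
proof -
  have "cycle_edges vs = cyc_edge vs ` {..<length vs}" unfolding cycle_edges_def by auto
  moreover have "inj_on (cyc_edge vs) {..<length vs}"
    using cyc_edge_inj[OF assms] by (auto simp: inj_on_def)
  ultimately show ?thesis by (simp add: card_image)
qed

lemma cyc_succ:
  assumes "distinct vs" "3 \<le> length vs"
  shows "cyc_edge vs k \<noteq> cyc_edge vs (Suc k) \<and> cyc_edge vs k \<inter> cyc_edge vs (Suc k) \<noteq> {}"
proof
  let ?n = "length vs"
  have "k mod ?n \<noteq> Suc k mod ?n" using assms(2) by (auto simp: mod_Suc)
  moreover have "cyc_edge vs (k mod ?n) = cyc_edge vs (Suc k mod ?n) \<Longrightarrow> k mod ?n = Suc k mod ?n"
  proof -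
    have pos: "0 < ?n" using assms(2) by linarith
    show "cyc_edge vs (k mod ?n) = cyc_edge vs (Suc k mod ?n) \<Longrightarrow> k mod ?n = Suc k mod ?n"
      using cyc_edge_inj[OF assms, of "k mod ?n" "Suc k mod ?n"] pos by simp
  qed
  ultimately show "cyc_edge vs k \<noteq> cyc_edge vs (Suc k)" by (metis cyc_edge_mod)
  show "cyc_edge vs k \<inter> cyc_edge vs (Suc k) \<noteq> {}" by (simp add: cyc_edge_def)
qed

lemma adj_pos:
  assumes "distinct vs" "3 \<le> length vs" "a < length vs" "b < length vs"
    "cyc_edge vs a \<inter> cyc_edge vs b \<noteq> {}"
  shows "a = b \<or> Suc a mod length vs = b \<or> Suc b mod length vs = a"
proof -
  obtain x where x: "x \<in> cyc_edge vs a" "x \<in> cyc_edge vs b" using assms(5) by auto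
  have "vs \<noteq> []" using assms by auto
  then have "x \<in> set vs" using x cyc_edge_sub by blast
  then obtain k where k: "k < length vs" "x = vs!k" by (metis in_set_conv_nth)
  have A: "a = k \<or> Suc a mod length vs = k" using mem_cyc_edge[OF assms(1) k(1), of a] x k assms by simp
  have B: "b = k \<or> Suc b mod length vs = k" using mem_cyc_edge[OF assms(1) k(1), of b] x k assms by simp
  show ?thesis using A B assms(3,4) by (auto simp: mod_Suc split: if_splits)
qed

lemma edges_at_vertex:
  assumes "distinct vs" "3 \<le> length vs" "k < length vs"
  shows "{e \<in> cycle_edges vs. vs!k \<in> e} = {cyc_edge vs k, cyc_edge vs (k + length vs - 1)}"
    and "cyc_edge vs k \<noteq> cyc_edge vs (k + length vs - 1)"
proof -
  let ?n = "length vs"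
  have ne: "vs \<noteq> []" using assms by auto
  show "{e \<in> cycle_edges vs. vs!k \<in> e} = {cyc_edge vs k, cyc_edge vs (k + ?n - 1)}"
  proof (intro equalityI subsetI)
    fix e assume "e \<in> {e \<in> cycle_edges vs. vs!k \<in> e}"
    then obtain i where i: "i < ?n" "e = cyc_edge vs i" "vs!k \<in> e" unfolding cycle_edges_def by auto
    then have "i = k \<or> Suc i mod ?n = k" using mem_cyc_edge[OF assms(1,3)] by auto
    then show "e \<in> {cyc_edge vs k, cyc_edge vs (k + ?n - 1)}"
    proof
      assume "i = k" then show ?thesis using i by simp
    next
      assume h: "Suc i mod ?n = k"
      have "(k + ?n - 1) mod ?n = i mod ?n" using h i(1) assms(3) by (auto simp: mod_Suc split: if_splits)
      then show ?thesis using i cyc_edge_cong[of "k + ?n - 1" vs i] by auto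
    qed
  next
    fix e assume "e \<in> {cyc_edge vs k, cyc_edge vs (k + ?n - 1)}"
    moreover have "vs!k \<in> cyc_edge vs k" using assms by (simp add: cyc_edge_def)
    moreover have "vs!k \<in> cyc_edge vs (k + ?n - 1)"
    proof -
      have "Suc (k + ?n - 1) = k + ?n" using assms by simp
      then have "Suc (k + ?n - 1) mod ?n = k" using assms by simp
      then show ?thesis by (simp add: cyc_edge_def)
    qed
    ultimately show "e \<in> {e \<in> cycle_edges vs. vs!k \<in> e}" using cyc_edge_in[OF ne] by auto
  qed
  have "k \<noteq> (k + ?n - 1) mod ?n" using assms by (auto simp: mod_Suc mod_if)
  moreover have pos: "0 < ?n" using assms(2) by linarith
  ultimately have "cyc_edge vs k \<noteq> cyc_edge vs ((k + ?n - 1) mod ?n)"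
    using cyc_edge_inj[OF assms(1,2) assms(3), of "(k + ?n - 1) mod ?n"] by auto
  then show "cyc_edge vs k \<noteq> cyc_edge vs (k + ?n - 1)" by (simp add: cyc_edge_mod)
qed


lemma conn_card:
  assumes fin: "finite N" and r: "r \<in> N" and conn: "\<forall>x\<in>N. R\<^sup>*\<^sup>* r x"
    and dom: "\<And>x y. R x y \<Longrightarrow> x \<in> N \<and> y \<in> N"
  shows "card N \<le> card {{x, y} | x y. R x y} + 1"
proof -
  define dist where "dist v = (LEAST m. (R ^^ m) r v)" for v
  have par: "\<exists>u. R u v \<and> dist u < dist v" if v: "v \<in> N" "v \<noteq> r" for v
  proof -
    have "\<exists>m. (R ^^ m) r v" using conn v rtranclp_power by metis
    then have rv: "(R ^^ dist v) r v" unfolding dist_def by (rule LeastI_ex)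
    have "dist v \<noteq> 0" using rv v by (metis relpowp_0_E)
    then obtain m where m: "dist v = Suc m" by (cases "dist v") auto
    then obtain u where u: "(R ^^ m) r u" "R u v" using rv by (metis relpowp_Suc_E)
    have "dist u \<le> m" unfolding dist_def using u(1) by (rule Least_le)
    then show ?thesis using u m by auto
  qed
  define p where "p v = (SOME u. R u v \<and> dist u < dist v)" for v
  have p: "R (p v) v \<and> dist (p v) < dist v" if "v \<in> N" "v \<noteq> r" for v
    unfolding p_def using someI_ex[OF par[OF that]] .
  define f where "f v = {p v, v}" for v
  have inj: "inj_on f (N - {r})"
  proof (rule inj_onI)
    fix v w assume vw: "v \<in> N - {r}" "w \<in> N - {r}" "f v = f w"
    show "v = w"
    proof (rule ccontr)
      assume ne: "v \<noteq> w"
      have "v = p w" "w = p v" using vw(3) ne unfolding f_def by (auto simp: doubleton_eq_iff)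
      then show False using p[of v] p[of w] vw by auto
    qed
  qed
  have img: "f ` (N - {r}) \<subseteq> {{x, y} | x y. R x y}" unfolding f_def using p by blast
  have finp: "finite {{x, y} | x y. R x y}"
  proof (rule finite_subset[of _ "Pow N"])
    show "{{x, y} | x y. R x y} \<subseteq> Pow N" using dom by blast
  qed (use fin in simp)
  have "card (N - {r}) \<le> card {{x, y} | x y. R x y}"
    using card_inj_on_le[OF inj img finp] .
  then show ?thesis using r fin by (simp add: card_Diff_singleton)
qed

lemma rtranclp_sym_rel:
  assumes "\<And>x y. R x y \<Longrightarrow> R y x" "R\<^sup>*\<^sup>* x y"
  shows "R\<^sup>*\<^sup>* y x"
  using assms(2)
proof (induction rule: rtranclp_induct)
  case base then show ?case by simp
next
  case (step y z)
  then show ?case using assms(1) by (meson converse_rtranclp_into_rtranclp)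
qed

definition Rf :: "'a set set set \<Rightarrow> 'a set set \<Rightarrow> 'a set set \<Rightarrow> 'a set set \<Rightarrow> bool" where
  "Rf FI F X Y \<longleftrightarrow> dual_adj FI X Y \<and> X \<noteq> F \<and> Y \<noteq> F"

lemma dual_adj_sym: "dual_adj FI X Y \<Longrightarrow> dual_adj FI Y X"
  unfolding dual_adj_def by auto

lemma Rf_sym: "Rf FI F X Y \<Longrightarrow> Rf FI F Y X"
  unfolding Rf_def dual_adj_def by auto

lemma no_bypass:
  assumes tree: "inner_dual_tree FI" and fin: "finite FI"
    and a1: "dual_adj FI F N1" and a2: "dual_adj FI F N2" and ne: "N1 \<noteq> N2"
    and path: "(Rf FI F)\<^sup>*\<^sup>* N1 N2"
  shows False
proof -
  define R' where "R' X Y \<longleftrightarrow> dual_adj FI X Y \<and> {X, Y} \<noteq> {F, N2}" for X Y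
  have F: "F \<in> FI" using a1 unfolding dual_adj_def by auto
  have RfR': "Rf FI F X Y \<Longrightarrow> R' X Y" for X Y unfolding Rf_def R'_def by auto
  have mono: "(Rf FI F)\<^sup>*\<^sup>* X Y \<Longrightarrow> R'\<^sup>*\<^sup>* X Y" for X Y
  proof (induction rule: rtranclp_induct)
    case base then show ?case by simp
  next
    case (step Y Z) then show ?case using RfR' by (meson rtranclp.rtrancl_into_rtrancl)
  qed
  have p1: "R'\<^sup>*\<^sup>* N1 N2" using path mono by simp
  have p2: "R'\<^sup>*\<^sup>* N2 N1"
  proof -
    have "(Rf FI F)\<^sup>*\<^sup>* N2 N1" using rtranclp_sym_rel[OF Rf_sym path] by simp
    then show ?thesis using mono by simp
  qed
  have FN1: "R' F N1" "R' N1 F" using a1 a2 ne unfolding R'_def dual_adj_def by (auto simp: doubleton_eq_iff)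
  have stp: "R'\<^sup>*\<^sup>* X Y" if "dual_adj FI X Y" for X Y
  proof (cases "{X, Y} = {F, N2}")
    case False then show ?thesis using that unfolding R'_def by auto
  next
    case True
    then have "(X = F \<and> Y = N2) \<or> (X = N2 \<and> Y = F)" by (auto simp: doubleton_eq_iff)
    then show ?thesis
    proof
      assume "X = F \<and> Y = N2"
      then show ?thesis using FN1 p1 by (meson converse_rtranclp_into_rtranclp)
    next
      assume "X = N2 \<and> Y = F"
      then show ?thesis using FN1 p2 by (meson rtranclp.rtrancl_into_rtrancl)
    qed
  qed
  have conn: "\<forall>X\<in>FI. R'\<^sup>*\<^sup>* F X"
  proof
    fix X assume "X \<in> FI"
    then have "(dual_adj FI)\<^sup>*\<^sup>* F X" using tree F unfolding inner_dual_tree_def by auto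
    then show "R'\<^sup>*\<^sup>* F X"
    proof (induction rule: rtranclp_induct)
      case base then show ?case by simp
    next
      case (step Y Z)
      then show ?case using rtranclp_trans[OF step.IH stp[OF step.hyps(2)]] by simp
    qed
  qed
  have dom: "R' X Y \<Longrightarrow> X \<in> FI \<and> Y \<in> FI" for X Y unfolding R'_def dual_adj_def by auto
  have c1: "card FI \<le> card {{x, y} | x y. R' x y} + 1" using conn_card[OF fin F conn dom] .
  define P where "P = {{x, y} | x y. dual_adj FI x y}"
  have eq: "{{x, y} | x y. R' x y} = P - {{F, N2}}"
  proof (intro equalityI subsetI)
    fix z assume "z \<in> {{x, y} | x y. R' x y}"
    then obtain x y where "z = {x, y}" "R' x y" by blast
    then show "z \<in> P - {{F, N2}}" unfolding P_def R'_def by auto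
  next
    fix z assume "z \<in> P - {{F, N2}}"
    then obtain x y where "z = {x, y}" "dual_adj FI x y" "z \<noteq> {F, N2}" unfolding P_def by blast
    then show "z \<in> {{x, y} | x y. R' x y}" unfolding R'_def by blast
  qed
  have finP: "finite P"
  proof (rule finite_subset[of _ "Pow FI"])
    show "P \<subseteq> Pow FI" unfolding P_def dual_adj_def by blast
  qed (use fin in simp)
  have inP: "{F, N2} \<in> P" unfolding P_def using a2 by blast
  have "card (P - {{F, N2}}) = card P - 1" using finP inP by (simp add: card_Diff_singleton)
  moreover have "card P + 1 = card FI" using tree unfolding inner_dual_tree_def P_def by simp
  moreover have "card P \<ge> 1" using finP inP by (metis One_nat_def Suc_leI card_gt_0_iff empty_iff)
  ultimately show False using c1 eq by simp
qed


locale cers =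
  fixes V :: "'a set" and E :: "'a set set" and FI :: "'a set set set" and Fo :: "'a set set"
  assumes cers: "CERS V E FI Fo"
begin

lemma pg: "plane_graph V E FI Fo" using cers unfolding CERS_def by simp
lemma pgs: "simple_graph V E" "finite FI" "Fo \<notin> FI" "\<forall>C\<in>insert Fo FI. is_cycle_in E C"
  "\<forall>e\<in>E. card {C \<in> insert Fo FI. e \<in> C} = 2" "card V + (card FI + 1) = card E + 2"
  using pg unfolding plane_graph_def by simp_all
lemma cs: "\<forall>v\<in>V. v \<notin> \<Union>Fo \<longrightarrow> degree E v = 3" "\<forall>v\<in>V. v \<in> \<Union>Fo \<longrightarrow> degree E v = 2 \<or> degree E v = 3"
  "inner_dual_tree FI"
  using cers unfolding CERS_def by simp_all
lemma finV: "finite V" using pgs(1) unfolding simple_graph_def by simp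
lemma Esub: "e \<in> E \<Longrightarrow> \<exists>u v. e = {u, v} \<and> u \<in> V \<and> v \<in> V \<and> u \<noteq> v"
proof -
  assume "e \<in> E"
  moreover have "E \<subseteq> {{u, v} | u v. u \<in> V \<and> v \<in> V \<and> u \<noteq> v}" using pgs(1) unfolding simple_graph_def by simp
  ultimately show ?thesis by blast
qed
lemma E_pow: "E \<subseteq> Pow V" using Esub by blast
lemma finE: "finite E" using E_pow finV by (meson finite_Pow_iff finite_subset)
lemma edge_card: "e \<in> E \<Longrightarrow> card e = 2" using Esub by fastforce
lemma finFI: "finite FI" using pgs by simp
lemma FoFI: "Fo \<notin> FI" using pgs by simp
lemma face_cyc: "C \<in> insert Fo FI \<Longrightarrow> \<exists>vs. distinct vs \<and> 3 \<le> length vs \<and> C = cycle_edges vs \<and> C \<subseteq> E"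
proof -
  assume "C \<in> insert Fo FI"
  then have "is_cycle_in E C" using pgs(4) by (rule bspec[rotated])
  then show ?thesis unfolding is_cycle_in_def by (elim conjE exE) (intro exI conjI, assumption+)
qed
lemma face_sub: assumes "C \<in> insert Fo FI" shows "C \<subseteq> E"
proof -
  obtain vs where "C \<subseteq> E" using face_cyc[OF assms] by blast
  then show ?thesis .
qed
lemma two_faces: assumes "e \<in> E" shows "card {C \<in> insert Fo FI. e \<in> C} = 2"
  using pgs(5) assms by simp
lemma euler: "card V + (card FI + 1) = card E + 2"
  using pgs(6) .
lemma tree: "inner_dual_tree FI" using cs by simp
lemma deg_int: "v \<in> V \<Longrightarrow> v \<notin> \<Union>Fo \<Longrightarrow> degree E v = 3" using cs(1) by (meson bspec)
lemma deg3: "v \<in> V \<Longrightarrow> degree E v \<le> 3"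
proof -
  assume v: "v \<in> V"
  show ?thesis
  proof (cases "v \<in> \<Union>Fo")
    case True
    then have "degree E v = 2 \<or> degree E v = 3" using cs(2) v by (meson bspec)
    then show ?thesis by linarith
  next
    case False then show ?thesis using deg_int v by simp
  qed
qed
lemma FI_ne: "FI \<noteq> {}" using tree unfolding inner_dual_tree_def by simp

lemma face_edges_at:
  assumes "C \<in> insert Fo FI" "v \<in> \<Union>C"
  shows "card {e \<in> C. v \<in> e} = 2"
proof -
  obtain vs where vs: "distinct vs" "3 \<le> length vs" "C = cycle_edges vs" using face_cyc[OF assms(1)] by blast
  have ne: "vs \<noteq> []" using vs by auto
  have "v \<in> set vs" using assms(2) vs(3) Union_cycle_edges[OF ne] by simp
  then obtain k where k: "k < length vs" "v = vs!k" by (metis in_set_conv_nth)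
  show ?thesis using edges_at_vertex[OF vs(1,2) k(1)] k vs(3) by simp
qed

lemma vert_V: "C \<in> insert Fo FI \<Longrightarrow> v \<in> \<Union>C \<Longrightarrow> v \<in> V"
  using face_sub E_pow by blast

lemma share_edge:
  assumes "A \<in> insert Fo FI" "B \<in> insert Fo FI" "v \<in> \<Union>A" "v \<in> \<Union>B"
  shows "\<exists>e\<in>A \<inter> B. v \<in> e"
proof (rule ccontr)
  assume no: "\<not> ?thesis"
  let ?SA = "{e \<in> A. v \<in> e}" and ?SB = "{e \<in> B. v \<in> e}" and ?Ev = "{e \<in> E. v \<in> e}"
  have d: "?SA \<inter> ?SB = {}" using no by blast
  have sub: "?SA \<union> ?SB \<subseteq> ?Ev" using face_sub assms(1,2) by blast
  have finEv: "finite ?Ev" using finE by simp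
  have fA: "finite ?SA" using finite_subset[OF _ finEv] sub by blast
  have fB: "finite ?SB" using finite_subset[OF _ finEv] sub by blast
  have "card (?SA \<union> ?SB) = card ?SA + card ?SB" using card_Un_disjoint[OF fA fB d] .
  then have "card (?SA \<union> ?SB) = 4"
    using face_edges_at[OF assms(1,3)] face_edges_at[OF assms(2,4)] by simp
  moreover have "card ?Ev \<le> 3" using deg3[OF vert_V[OF assms(1,3)]] unfolding degree_def .
  moreover have "card (?SA \<union> ?SB) \<le> card ?Ev" using card_mono[OF finEv sub] .
  ultimately show False by simp
qed

lemma no_three:
  assumes "A \<in> FI" "B \<in> FI" "C \<in> FI" "A \<noteq> B" "B \<noteq> C" "A \<noteq> C"
    "v \<in> \<Union>A" "v \<in> \<Union>B" "v \<in> \<Union>C"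
  shows False
proof -
  have ab: "dual_adj FI A B" using share_edge[of A B v] assms unfolding dual_adj_def by blast
  have ac: "dual_adj FI A C" using share_edge[of A C v] assms unfolding dual_adj_def by blast
  have bc: "dual_adj FI B C" using share_edge[of B C v] assms unfolding dual_adj_def by blast
  have "Rf FI A B C" using bc assms unfolding Rf_def by auto
  then show False using no_bypass[OF tree finFI ab ac assms(5)] by blast
qed

lemma outer_all: "\<Union>Fo = V"
proof
  show "\<Union>Fo \<subseteq> V" using face_sub[of Fo] E_pow by blast
  show "V \<subseteq> \<Union>Fo"
  proof
    fix v assume v: "v \<in> V"
    show "v \<in> \<Union>Fo"
    proof (rule ccontr)
      assume nv: "v \<notin> \<Union>Fo"
      let ?Ev = "{e \<in> E. v \<in> e}"
      have c3: "card ?Ev = 3" using deg_int[OF v nv] unfolding degree_def .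
      have finEv: "finite ?Ev" using finE by simp
      obtain e where e: "e \<in> ?Ev" using c3 by (metis card.empty ex_in_conv zero_neq_numeral)
      have eFo: "e \<notin> Fo" using e nv by blast
      obtain A B where AB: "{C \<in> insert Fo FI. e \<in> C} = {A, B}" "A \<noteq> B"
        using two_faces[of e] e by (auto simp: card_2_iff)
      have A: "A \<in> FI" "e \<in> A" and B: "B \<in> FI" "e \<in> B" using AB eFo by (auto simp: set_eq_iff)
      have vA: "v \<in> \<Union>A" using A e by blast
      have vB: "v \<in> \<Union>B" using B e by blast
      have "card {e \<in> A. v \<in> e} = 2" using face_edges_at[of A v] A vA by simp
      moreover have "{e \<in> A. v \<in> e} \<subseteq> ?Ev" using face_sub[of A] A by auto
      ultimately have "card (?Ev - {e \<in> A. v \<in> e}) = 1" using c3 finEv by (simp add: card_Diff_subset finite_subset)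
      then obtain e3 where e3: "e3 \<in> ?Ev" "e3 \<notin> A" by (metis (no_types, lifting) DiffE card_1_singletonE insertI1 mem_Collect_eq)
      have e3Fo: "e3 \<notin> Fo" using e3 nv by blast
      obtain C D where CD: "{C \<in> insert Fo FI. e3 \<in> C} = {C, D}" "C \<noteq> D"
        using two_faces[of e3] e3 by (auto simp: card_2_iff)
      then have CD': "C \<in> FI" "e3 \<in> C" "D \<in> FI" "e3 \<in> D" using e3Fo by (auto simp: set_eq_iff)
      have "C \<noteq> B \<or> D \<noteq> B" using CD(2) by auto
      then obtain X where X: "X \<in> FI" "e3 \<in> X" "X \<noteq> B"
        using CD' by blast
      have "X \<noteq> A" using X e3 by auto
      moreover have "v \<in> \<Union>X" using X e3 by blast
      ultimately show False using no_three[of A B X v] A B X AB vA vB by auto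
    qed
  qed
qed

lemma card_Fo: "card Fo = card V"
proof -
  obtain vs where vs: "distinct vs" "3 \<le> length vs" "Fo = cycle_edges vs" using face_cyc[of Fo] by blast
  have ne: "vs \<noteq> []" using vs by auto
  have "card Fo = length vs" using card_cycle_edges[OF vs(1,2)] vs(3) by simp
  also have "\<dots> = card (set vs)" using vs(1) by (simp add: distinct_card)
  also have "\<dots> = card (\<Union>Fo)" using Union_cycle_edges[OF ne] vs(3) by simp
  finally show ?thesis using outer_all by simp
qed

lemma card_interior: "card (E - Fo) + 1 = card FI"
proof -
  have "card (E - Fo) = card E - card Fo" using face_sub[of Fo] finE by (simp add: card_Diff_subset finite_subset)
  moreover have "card FI \<ge> 1" using FI_ne finFI by (simp add: Suc_leI card_gt_0_iff)
  ultimately show ?thesis using euler card_Fo by simp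
qed

definition sig :: "'a set \<Rightarrow> 'a set set set" where "sig e = {C \<in> FI. e \<in> C}"

lemma shared_not_outer:
  assumes "A \<in> FI" "B \<in> FI" "A \<noteq> B" "e \<in> A" "e \<in> B"
  shows "e \<notin> Fo \<and> sig e = {A, B} \<and> e \<in> E"
proof -
  have eE: "e \<in> E" using face_sub[of A] assms by auto
  have fin: "finite {C \<in> insert Fo FI. e \<in> C}" using finFI by simp
  have nFo: "e \<notin> Fo"
  proof
    assume "e \<in> Fo"
    then have "{Fo, A, B} \<subseteq> {C \<in> insert Fo FI. e \<in> C}" using assms by auto
    then have "card {Fo, A, B} \<le> 2" using card_mono[OF fin] two_faces[OF eE] by metis
    moreover have "Fo \<noteq> A" "Fo \<noteq> B" using assms FoFI by auto
    ultimately show False using assms(3) by simp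
  qed
  have "sig e = {C \<in> insert Fo FI. e \<in> C}" unfolding sig_def using nFo by auto
  then have c: "card (sig e) = 2" "finite (sig e)" using two_faces[OF eE] fin by auto
  have "{A, B} \<subseteq> sig e" using assms unfolding sig_def by auto
  then have "{A, B} = sig e" using c assms(3) by (metis card_2_iff card_subset_eq)
  then show ?thesis using nFo eE by simp
qed

lemma unique_shared:
  assumes "A \<in> FI" "B \<in> FI" "A \<noteq> B" "e \<in> A \<inter> B" "e' \<in> A \<inter> B"
  shows "e = e'"
proof -
  define P where "P = {{x, y} | x y. dual_adj FI x y}"
  have img: "sig ` (E - Fo) = P"
  proof (intro equalityI subsetI)
    fix z assume "z \<in> sig ` (E - Fo)"
    then obtain e where e: "e \<in> E" "e \<notin> Fo" "z = sig e" by auto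
    have fin: "finite {C \<in> insert Fo FI. e \<in> C}" using finFI by simp
    have "sig e = {C \<in> insert Fo FI. e \<in> C}" unfolding sig_def using e by auto
    then have "card (sig e) = 2" using two_faces[OF e(1)] by simp
    then obtain X Y where XY: "sig e = {X, Y}" "X \<noteq> Y" by (auto simp: card_2_iff)
    then have "X \<in> FI" "Y \<in> FI" "e \<in> X" "e \<in> Y" unfolding sig_def by (auto simp: set_eq_iff)
    then have "dual_adj FI X Y" using XY unfolding dual_adj_def by auto
    then show "z \<in> P" unfolding P_def using XY e by auto
  next
    fix z assume "z \<in> P"
    then obtain X Y where XY: "z = {X, Y}" "dual_adj FI X Y" unfolding P_def by auto
    then obtain e where "e \<in> X" "e \<in> Y" unfolding dual_adj_def by auto
    then have "e \<notin> Fo \<and> sig e = {X, Y} \<and> e \<in> E" using shared_not_outer XY unfolding dual_adj_def by auto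
    then show "z \<in> sig ` (E - Fo)" using XY by auto
  qed
  have "card P + 1 = card FI" using tree unfolding inner_dual_tree_def P_def by simp
  then have "card (sig ` (E - Fo)) = card (E - Fo)" using img card_interior by simp
  then have inj: "inj_on sig (E - Fo)" using eq_card_imp_inj_on finE by blast
  have 1: "e \<notin> Fo \<and> sig e = {A, B} \<and> e \<in> E" using shared_not_outer assms by auto
  have 2: "e' \<notin> Fo \<and> sig e' = {A, B} \<and> e' \<in> E" using shared_not_outer assms by auto
  show ?thesis using inj 1 2 unfolding inj_on_def by auto
qed

lemma vertex_shared:
  assumes "A \<in> FI" "B \<in> FI" "A \<noteq> B" "x \<in> \<Union>A" "x \<in> \<Union>B" "e \<in> A \<inter> B"
  shows "x \<in> e"
proof -
  obtain e' where "e' \<in> A \<inter> B" "x \<in> e'" using share_edge[of A B x] assms by auto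
  then show ?thesis using unique_shared[OF assms(1-3) assms(6)] by auto
qed

end


definition cdist :: "nat \<Rightarrow> nat \<Rightarrow> nat" where "cdist n r = min r (n - r)"

lemma cdist_lip:
  assumes "r < n" "2 \<le> n"
  shows "cdist n (Suc r mod n) \<le> cdist n r + 1 \<and> cdist n r \<le> cdist n (Suc r mod n) + 1"
  using assms by (auto simp: cdist_def mod_Suc)

lemma cyc_walk:
  assumes "distinct ws" "3 \<le> length ws" "i < length ws" "j < length ws"
  defines "n \<equiv> length ws"
  defines "r \<equiv> (j + (n - i)) mod n"
  shows "\<exists>es. length es = Suc (cdist n r) \<and> hd es = cyc_edge ws i \<and> last es = cyc_edge ws j \<and>
     set es \<subseteq> cycle_edges ws \<and> (\<forall>t < cdist n r. es!t \<noteq> es!Suc t \<and> es!t \<inter> es!Suc t \<noteq> {})"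
proof -
  have ne: "ws \<noteq> []" using assms by auto
  have n0: "0 < n" using assms(3) unfolding n_def by linarith
  have rn: "r < n" unfolding r_def using n0 by simp
  have endj: "cyc_edge ws (i + r) = cyc_edge ws j"
  proof (rule cyc_edge_cong)
    have "(i + r) mod n = (i + (j + (n - i))) mod n" unfolding r_def by (simp add: mod_add_right_eq)
    also have "i + (j + (n - i)) = j + n" using assms(3) unfolding n_def by simp
    finally show "(i + r) mod length ws = j mod length ws" unfolding n_def by simp
  qed
  show ?thesis
  proof (cases "r \<le> n - r")
    case True
    then have cd: "cdist n r = r" unfolding cdist_def by simp
    define es where "es = map (\<lambda>t. cyc_edge ws (i + t)) [0..<Suc r]"
    have "length es = Suc (cdist n r)" unfolding es_def cd by simp
    moreover have "hd es = cyc_edge ws i" unfolding es_def by (simp del: upt_Suc add: upt_conv_Cons)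
    moreover have "last es = cyc_edge ws j" unfolding es_def using endj by (simp add: last_map)
    moreover have "set es \<subseteq> cycle_edges ws" unfolding es_def using cyc_edge_in[OF ne] by auto
    moreover have "\<forall>t < cdist n r. es!t \<noteq> es!Suc t \<and> es!t \<inter> es!Suc t \<noteq> {}"
    proof (intro allI impI)
      fix t assume "t < cdist n r"
      then have "es!t = cyc_edge ws (i + t)" "es!Suc t = cyc_edge ws (Suc (i + t))" unfolding es_def cd
        by (simp_all del: upt_Suc add: nth_map)
      then show "es!t \<noteq> es!Suc t \<and> es!t \<inter> es!Suc t \<noteq> {}" using cyc_succ[OF assms(1,2)] by simp
    qed
    ultimately show ?thesis by blast
  next
    case False
    then have cd: "cdist n r = n - r" unfolding cdist_def by simp
    define es where "es = map (\<lambda>t. cyc_edge ws (i + n - t)) [0..<Suc (n - r)]"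
    have "length es = Suc (cdist n r)" unfolding es_def cd by simp
    moreover have "hd es = cyc_edge ws i"
    proof -
      have "hd es = cyc_edge ws (i + n)" unfolding es_def by (simp del: upt_Suc add: upt_conv_Cons)
      also have "\<dots> = cyc_edge ws i" by (rule cyc_edge_cong) (simp add: n_def)
      finally show ?thesis .
    qed
    moreover have "last es = cyc_edge ws j"
    proof -
      have "last es = cyc_edge ws (i + n - (n - r))" unfolding es_def by (simp add: last_map)
      also have "i + n - (n - r) = i + r" using rn by simp
      finally show ?thesis using endj by simp
    qed
    moreover have "set es \<subseteq> cycle_edges ws" unfolding es_def using cyc_edge_in[OF ne] by auto
    moreover have "\<forall>t < cdist n r. es!t \<noteq> es!Suc t \<and> es!t \<inter> es!Suc t \<noteq> {}"
    proof (intro allI impI)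
      fix t assume t: "t < cdist n r"
      then have "es!t = cyc_edge ws (i + n - t)" "es!Suc t = cyc_edge ws (i + n - Suc t)" unfolding es_def cd
        by (simp_all del: upt_Suc add: nth_map)
      moreover have "i + n - t = Suc (i + n - Suc t)" using t cd by simp
      ultimately show "es!t \<noteq> es!Suc t \<and> es!t \<inter> es!Suc t \<noteq> {}" using cyc_succ[OF assms(1,2), of "i + n - Suc t"]
        by (simp add: Int_commute eq_commute)
    qed
    ultimately show ?thesis by blast
  qed
qed

context cers
begin

lemma branch_exists:
  assumes "F \<in> FI" "A \<in> FI" "A \<noteq> F"
  shows "\<exists>N. dual_adj FI F N \<and> (Rf FI F)\<^sup>*\<^sup>* N A"
proof -
  have "(dual_adj FI)\<^sup>*\<^sup>* F A" using tree assms unfolding inner_dual_tree_def by blast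
  then have "A = F \<or> (\<exists>N. dual_adj FI F N \<and> (Rf FI F)\<^sup>*\<^sup>* N A)"
  proof (induction rule: rtranclp_induct)
    case base then show ?case by simp
  next
    case (step Y Z)
    show ?case
    proof (cases "Z = F")
      case True then show ?thesis by simp
    next
      case zF: False
      show ?thesis
      proof (cases "Y = F")
        case True then show ?thesis using step.hyps(2) by auto
      next
        case False
        then obtain N where N: "dual_adj FI F N" "(Rf FI F)\<^sup>*\<^sup>* N Y" using step.IH by auto
        have "Rf FI F Y Z" using step.hyps(2) False zF unfolding Rf_def by simp
        then show ?thesis using N by (meson rtranclp.rtrancl_into_rtrancl)
      qed
    qed
  qed
  then show ?thesis using assms by simp
qed

lemma branch_unique:
  assumes "dual_adj FI F N" "dual_adj FI F N'" "(Rf FI F)\<^sup>*\<^sup>* N A" "(Rf FI F)\<^sup>*\<^sup>* N' A"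
  shows "N = N'"
proof (rule ccontr)
  assume ne: "N \<noteq> N'"
  have "(Rf FI F)\<^sup>*\<^sup>* A N'" using rtranclp_sym_rel[OF Rf_sym assms(4)] by simp
  then have "(Rf FI F)\<^sup>*\<^sup>* N N'" using assms(3) by (rule rtranclp_trans[rotated])
  then show False using no_bypass[OF tree finFI assms(1,2) ne] by simp
qed

lemma inner_face_of:
  assumes "g \<in> E"
  shows "\<exists>A\<in>FI. g \<in> A"
proof -
  have "card {C \<in> insert Fo FI. g \<in> C} = 2" using two_faces[OF assms] .
  then obtain X Y where "{C \<in> insert Fo FI. g \<in> C} = {X, Y}" "X \<noteq> Y" by (auto simp: card_2_iff)
  then have "X \<in> insert Fo FI" "g \<in> X" "Y \<in> insert Fo FI" "g \<in> Y" "X \<noteq> Y" by (auto simp: set_eq_iff)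
  then show ?thesis by auto
qed

lemma geodesic:
  assumes F: "F \<in> FI" and ws: "distinct ws" "3 \<le> length ws" "cycle_edges ws = F"
    and ij: "i < length ws" "j < length ws"
  shows "line_dist E (cyc_edge ws i) (cyc_edge ws j) = cdist (length ws) ((j + (length ws - i)) mod length ws)"
proof -
  define n where "n = length ws"
  have ne: "ws \<noteq> []" using ws by auto
  have n2: "2 \<le> n" using ws unfolding n_def by simp
  have FE: "F \<subseteq> E" using face_sub F by simp
  define pos where "pos g = (THE k. k < n \<and> cyc_edge ws k = g)" for g
  have pos_eq: "pos (cyc_edge ws k) = k" if "k < n" for k
    unfolding pos_def
  proof (rule the_equality)
    show "k < n \<and> cyc_edge ws k = cyc_edge ws k" using that by simp
    fix k' assume "k' < n \<and> cyc_edge ws k' = cyc_edge ws k"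
    then show "k' = k" using cyc_edge_inj[OF ws(1,2)] that unfolding n_def by blast
  qed
  have pos_prop: "pos g < n \<and> cyc_edge ws (pos g) = g" if gF: "g \<in> F" for g
  proof -
    obtain k where "k < n" "g = cyc_edge ws k" using gF ws(3) unfolding cycle_edges_def n_def by auto
    then show ?thesis using pos_eq by simp
  qed
  define rr where "rr k = (k + (n - i)) mod n" for k
  have rr_lt: "rr k < n" for k unfolding rr_def using n2 by simp
  have rr_suc: "rr (Suc a mod n) = Suc (rr a) mod n" for a
  proof -
    have "rr (Suc a mod n) = (Suc a + (n - i)) mod n" unfolding rr_def by (simp add: mod_add_left_eq)
    also have "\<dots> = Suc (a + (n - i)) mod n" by simp
    also have "\<dots> = Suc (rr a) mod n" unfolding rr_def by (simp add: mod_Suc_eq)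
    finally show ?thesis .
  qed
  define Pf where "Pf g = cdist n (rr (pos g))" for g
  have Pf_lip: "Pf g' \<le> Pf g + 1" if "g \<in> F" "g' \<in> F" "g \<inter> g' \<noteq> {}" for g g'
  proof -
    have a: "pos g < n" "cyc_edge ws (pos g) = g" using pos_prop[OF that(1)] by auto
    have b: "pos g' < n" "cyc_edge ws (pos g') = g'" using pos_prop[OF that(2)] by auto
    have "pos g = pos g' \<or> Suc (pos g) mod n = pos g' \<or> Suc (pos g') mod n = pos g"
      using adj_pos[OF ws(1,2), of "pos g" "pos g'"] a b that(3) unfolding n_def by simp
    then show ?thesis
    proof (elim disjE)
      assume "pos g = pos g'" then show ?thesis unfolding Pf_def by simp
    next
      assume h: "Suc (pos g) mod n = pos g'"
      have "Pf g' = cdist n (Suc (rr (pos g)) mod n)" unfolding Pf_def using h[symmetric] rr_suc by simp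
      then show ?thesis using cdist_lip[OF rr_lt n2, of "pos g"] unfolding Pf_def by simp
    next
      assume h: "Suc (pos g') mod n = pos g"
      have "Pf g = cdist n (Suc (rr (pos g')) mod n)" unfolding Pf_def using h[symmetric] rr_suc by simp
      then show ?thesis using cdist_lip[OF rr_lt n2, of "pos g'"] unfolding Pf_def by simp
    qed
  qed
  define br where "br g = (THE N. dual_adj FI F N \<and> (\<exists>A\<in>FI. g \<in> A \<and> (Rf FI F)\<^sup>*\<^sup>* N A))" for g
  have br_prop: "dual_adj FI F (br g) \<and> (\<forall>A\<in>FI. g \<in> A \<longrightarrow> (Rf FI F)\<^sup>*\<^sup>* (br g) A)"
    if g: "g \<in> E" "g \<notin> F" for g
  proof -
    obtain A where A: "A \<in> FI" "g \<in> A" using inner_face_of[OF g(1)] by blast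
    have AF: "A \<noteq> F" using A g by auto
    obtain N where N: "dual_adj FI F N" "(Rf FI F)\<^sup>*\<^sup>* N A" using branch_exists[OF F A(1) AF] by blast
    have all: "\<forall>A'\<in>FI. g \<in> A' \<longrightarrow> (Rf FI F)\<^sup>*\<^sup>* N A'"
    proof (intro ballI impI)
      fix A' assume A': "A' \<in> FI" "g \<in> A'"
      show "(Rf FI F)\<^sup>*\<^sup>* N A'"
      proof (cases "A' = A")
        case True then show ?thesis using N by simp
      next
        case False
        have "Rf FI F A A'" unfolding Rf_def dual_adj_def using A A' False AF g by auto
        then show ?thesis using N(2) by (meson rtranclp.rtrancl_into_rtrancl)
      qed
    qed
    have "br g = N" unfolding br_def
    proof (rule the_equality)
      show "dual_adj FI F N \<and> (\<exists>A\<in>FI. g \<in> A \<and> (Rf FI F)\<^sup>*\<^sup>* N A)" using N A by blast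
      fix N' assume N': "dual_adj FI F N' \<and> (\<exists>A\<in>FI. g \<in> A \<and> (Rf FI F)\<^sup>*\<^sup>* N' A)"
      then obtain A'' where "A'' \<in> FI" "g \<in> A''" "(Rf FI F)\<^sup>*\<^sup>* N' A''" by blast
      then show "N' = N" using branch_unique[of F N' N A''] N' N(1) all by blast
    qed
    then show ?thesis using N all by simp
  qed
  define sh where "sh N = (THE e. e \<in> F \<and> e \<in> N)" for N
  have sh_prop: "sh N \<in> F \<and> sh N \<in> N" if adjN: "dual_adj FI F N" for N
  proof -
    obtain e where e: "e \<in> F" "e \<in> N" using adjN unfolding dual_adj_def by auto
    have "sh N = e" unfolding sh_def
    proof (rule the_equality)
      show "e \<in> F \<and> e \<in> N" using e by simp
      fix e' assume "e' \<in> F \<and> e' \<in> N"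
      then show "e' = e" using unique_shared[of F N e' e] adjN e unfolding dual_adj_def by auto
    qed
    then show ?thesis using e by simp
  qed
  have hF: "x \<in> sh (br g')" if h: "g \<in> F" "g' \<in> E" "g' \<notin> F" "x \<in> g" "x \<in> g'" for g g' x
  proof -
    obtain A' where A': "A' \<in> FI" "g' \<in> A'" using inner_face_of[OF h(2)] by blast
    have AF: "A' \<noteq> F" using A' h by auto
    have xF: "x \<in> \<Union>F" using h by blast
    have xA: "x \<in> \<Union>A'" using h A' by blast
    obtain e where "e \<in> F \<inter> A'" using share_edge[of F A' x] F A' xF xA by blast
    then have adj: "dual_adj FI F A'" unfolding dual_adj_def using F A' AF by auto
    have "br g' = A'" using branch_unique[of F "br g'" A' A'] br_prop[OF h(2,3)] A' adj by blast
    moreover have "x \<in> sh A'" using vertex_shared[of F A' x "sh A'"] F A' AF xF xA sh_prop[OF adj] by blast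
    ultimately show ?thesis by simp
  qed
  have br_eq: "br g = br g'" if h: "g \<in> E" "g \<notin> F" "g' \<in> E" "g' \<notin> F" "x \<in> g" "x \<in> g'" for g g' x
  proof -
    obtain A where A: "A \<in> FI" "g \<in> A" using inner_face_of[OF h(1)] by blast
    obtain A' where A': "A' \<in> FI" "g' \<in> A'" using inner_face_of[OF h(3)] by blast
    have AF: "A \<noteq> F" "A' \<noteq> F" using A A' h by auto
    have b1: "dual_adj FI F (br g)" "(Rf FI F)\<^sup>*\<^sup>* (br g) A" using br_prop[OF h(1,2)] A by auto
    have b2: "dual_adj FI F (br g')" "(Rf FI F)\<^sup>*\<^sup>* (br g') A'" using br_prop[OF h(3,4)] A' by auto
    have "(Rf FI F)\<^sup>*\<^sup>* (br g) A'"
    proof (cases "A = A'")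
      case True then show ?thesis using b1 by simp
    next
      case False
      have xA: "x \<in> \<Union>A" "x \<in> \<Union>A'" using h A A' by blast+
      obtain e where "e \<in> A \<inter> A'" using share_edge[of A A' x] A A' xA by blast
      then have "Rf FI F A A'" unfolding Rf_def dual_adj_def using A A' AF False by auto
      then show ?thesis using b1 by (meson rtranclp.rtrancl_into_rtrancl)
    qed
    then show ?thesis using branch_unique[OF b1(1) b2(1)] b2(2) by blast
  qed
  define P where "P g = (if g \<in> F then Pf g else Pf (sh (br g)))" for g
  have P_lip: "P g' \<le> P g + 1" if h: "g \<in> E" "g' \<in> E" "g \<inter> g' \<noteq> {}" for g g'
  proof -
    obtain x where x: "x \<in> g" "x \<in> g'" using h(3) by auto
    show ?thesis
    proof (cases "g \<in> F")
      case gF: True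
      show ?thesis
      proof (cases "g' \<in> F")
        case True then show ?thesis using Pf_lip[OF gF True] h gF unfolding P_def by simp
      next
        case False
        have "x \<in> sh (br g')" using hF[OF gF h(2) False x] .
        moreover have "sh (br g') \<in> F" using sh_prop br_prop[OF h(2) False] by blast
        ultimately have "Pf (sh (br g')) \<le> Pf g + 1" using Pf_lip[OF gF] x by blast
        then show ?thesis unfolding P_def using gF False by simp
      qed
    next
      case gF: False
      show ?thesis
      proof (cases "g' \<in> F")
        case True
        have "x \<in> sh (br g)" using hF[OF True h(1) gF x(2) x(1)] .
        moreover have "sh (br g) \<in> F" using sh_prop br_prop[OF h(1) gF] by blast
        ultimately have "Pf g' \<le> Pf (sh (br g)) + 1" using Pf_lip[OF _ True] x by blast
        then show ?thesis unfolding P_def using gF True by simp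
      next
        case False
        then show ?thesis using br_eq[OF h(1) gF h(2) False x] unfolding P_def using gF by simp
      qed
    qed
  qed
  define r where "r = (j + (n - i)) mod n"
  have P1: "P (cyc_edge ws i) = 0"
  proof -
    have "cyc_edge ws i \<in> F" using cyc_edge_in[OF ne] ws(3) by simp
    moreover have "rr i = 0" unfolding rr_def using ij(1) n_def by simp
    ultimately show ?thesis unfolding P_def Pf_def using pos_eq ij(1) n_def by (simp add: cdist_def)
  qed
  have P2: "P (cyc_edge ws j) = cdist n r"
  proof -
    have "cyc_edge ws j \<in> F" using cyc_edge_in[OF ne] ws(3) by simp
    then show ?thesis unfolding P_def Pf_def r_def rr_def using pos_eq ij(2) n_def by simp
  qed
  have lower: "cdist n r \<le> m" if h: "length es = Suc m" "hd es = cyc_edge ws i" "last es = cyc_edge ws j"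
    "set es \<subseteq> E" "\<forall>t<m. es ! t \<noteq> es ! Suc t \<and> es ! t \<inter> es ! Suc t \<noteq> {}" for es m
  proof -
    have "P (es ! t) \<le> P (es ! 0) + t" if tm: "t \<le> m" for t
      using tm
    proof (induction t)
      case 0 then show ?case by simp
    next
      case (Suc t)
      have "es ! t \<in> E" "es ! Suc t \<in> E" using \<open>set es \<subseteq> E\<close> \<open>length es = Suc m\<close> Suc.prems by auto
      moreover have "es ! t \<inter> es ! Suc t \<noteq> {}" using \<open>\<forall>t<m. _\<close> Suc.prems by auto
      ultimately have "P (es ! Suc t) \<le> P (es ! t) + 1" using P_lip by blast
      then show ?case using Suc by simp
    qed
    then have "P (es ! m) \<le> P (es ! 0) + m" by simp
    moreover have "es ! 0 = cyc_edge ws i" using h(1,2) by (metis hd_conv_nth list.size(3) nat.distinct(1))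
    moreover have "es ! m = cyc_edge ws j" using h(1,3) by (metis diff_Suc_1 last_conv_nth list.size(3) nat.distinct(1))
    ultimately show ?thesis using P1 P2 by simp
  qed
  obtain es where es: "length es = Suc (cdist n r)" "hd es = cyc_edge ws i" "last es = cyc_edge ws j"
     "set es \<subseteq> cycle_edges ws" "\<forall>t < cdist n r. es!t \<noteq> es!Suc t \<and> es!t \<inter> es!Suc t \<noteq> {}"
    using cyc_walk[OF ws(1,2) ij] unfolding n_def r_def by blast
  have "line_dist E (cyc_edge ws i) (cyc_edge ws j) = cdist n r"
    unfolding line_dist_def
  proof (rule Least_equality)
    show "\<exists>es. length es = Suc (cdist n r) \<and> hd es = cyc_edge ws i \<and> last es = cyc_edge ws j \<and> set es \<subseteq> E \<and>
        (\<forall>t<cdist n r. es ! t \<noteq> es ! Suc t \<and> es ! t \<inter> es ! Suc t \<noteq> {})"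
      using es ws(3) FE by blast
    fix m assume "\<exists>es. length es = Suc m \<and> hd es = cyc_edge ws i \<and> last es = cyc_edge ws j \<and> set es \<subseteq> E \<and>
        (\<forall>t<m. es ! t \<noteq> es ! Suc t \<and> es ! t \<inter> es ! Suc t \<noteq> {})"
    then show "cdist n r \<le> m" using lower by blast
  qed
  then show ?thesis unfolding n_def r_def .
qed

end


lemma parity_from_cdist:
  assumes "even n" "p0 < n" "p < n" "even (cdist n ((p + (n - p0)) mod n))"
  shows "p mod 2 = p0 mod 2"
proof -
  define x where "x = p + (n - p0)"
  define r where "r = x mod n"
  have x2: "x < 2 * n" unfolding x_def using assms by simp
  have r: "(r = x) \<or> (r = x - n \<and> n \<le> x)"
  proof (cases "x < n")
    case True then show ?thesis unfolding r_def by simp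
  next
    case False
    then have "r = (x - n) mod n" unfolding r_def by (simp add: le_mod_geq)
    moreover have "x - n < n" using x2 by simp
    ultimately show ?thesis using False by simp
  qed
  have rn: "r \<le> n" unfolding r_def using assms(2) by simp
  have "even (min r (n - r))" using assms(4) unfolding cdist_def r_def x_def .
  then have "even r" using rn assms(1) by (cases "r \<le> n - r") (auto simp: min_def)
  then have "even x" using r assms(1) by auto
  then show ?thesis unfolding x_def using assms(1,2) by presburger
qed

lemma suc_mod_parity:
  assumes "even n" "a < n"
  shows "(Suc a mod n) mod 2 \<noteq> a mod 2"
  using assms by (auto simp: mod_Suc)

context cers
begin

lemma face_fix:
  assumes reg: "card FI \<le> 2 \<or>
      (\<forall>F F' F'' e f. F \<in> FI \<longrightarrow> F' \<in> FI \<longrightarrow> F'' \<in> FI \<longrightarrow>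
          F \<noteq> F' \<longrightarrow> F' \<noteq> F'' \<longrightarrow> F \<noteq> F'' \<longrightarrow>
          e \<in> F \<inter> F' \<longrightarrow> f \<in> F' \<inter> F'' \<longrightarrow> even (line_dist E e f))"
    and F: "F \<in> FI" and pm: "perfect_matching V E M0" and alt: "M_alternating M0 F"
  shows "\<exists>D. D \<subseteq> F \<and> (\<forall>v \<in> \<Union>F. \<exists>!e. e \<in> D \<and> v \<in> e) \<and>
           (\<forall>N. dual_adj FI F N \<longrightarrow> link F N \<subseteq> D) \<and> (\<forall>v\<in>\<Union>F. \<forall>e\<in>M0. v \<in> e \<longrightarrow> e \<in> F)"
proof -
  obtain ws where ws: "distinct ws" "3 \<le> length ws" "cycle_edges ws = F"
    and altw: "\<forall>i<length ws. cyc_edge ws i \<in> M0 \<longleftrightarrow> cyc_edge ws (Suc i) \<notin> M0"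
    using alt unfolding M_alternating_def by blast
  define n where "n = length ws"
  have ne: "ws \<noteq> []" using ws by auto
  have n0: "0 < n" using ws(2) unfolding n_def by linarith
  have alt_all: "cyc_edge ws k \<in> M0 \<longleftrightarrow> cyc_edge ws (Suc k) \<notin> M0" for k
  proof -
    have "cyc_edge ws k = cyc_edge ws (k mod n)" using cyc_edge_mod n_def by metis
    moreover have "cyc_edge ws (Suc k) = cyc_edge ws (Suc (k mod n))"
      by (rule cyc_edge_cong) (simp add: n_def[symmetric] mod_Suc_eq)
    moreover have "k mod n < length ws" using n0 n_def by simp
    ultimately show ?thesis using altw by simp
  qed
  define c0 where "c0 = (cyc_edge ws 0 \<in> M0)"
  have par: "cyc_edge ws k \<in> M0 \<longleftrightarrow> (even k \<longleftrightarrow> c0)" for k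
  proof (induction k)
    case 0 then show ?case unfolding c0_def by simp
  next
    case (Suc k) then show ?case using alt_all[of k] by auto
  qed
  have evn: "even n"
  proof -
    have "cyc_edge ws n = cyc_edge ws 0" by (rule cyc_edge_cong) (simp add: n_def)
    then show ?thesis using par[of n] unfolding c0_def by auto
  qed
  have vert: "\<exists>k<n. v = ws ! k" if "v \<in> \<Union>F" for v
  proof -
    have "\<Union>F = set ws" using ws(3) Union_cycle_edges[OF ne] by simp
    then have "v \<in> set ws" using that by blast
    then show ?thesis unfolding n_def by (metis in_set_conv_nth)
  qed
  define pr where "pr k = (k + n - 1) mod n" for k
  have pr_lt: "pr k < n" for k unfolding pr_def using n0 by simp
  have pr_par: "pr k mod 2 \<noteq> k mod 2" if "k < n" for k
  proof -
    have "Suc (pr k) mod n = k" unfolding pr_def using that n0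
      by (metis Suc_diff_1 add_gr_0 mod_Suc_eq mod_add_self2 mod_less)
    then show ?thesis using suc_mod_parity[OF evn pr_lt] by metis
  qed
  have at_v: "m = k \<or> m = pr k" if "k < n" "m < n" "ws ! k \<in> cyc_edge ws m" for k m
  proof -
    have "m = k \<or> Suc m mod n = k" using mem_cyc_edge[OF ws(1), of k m] that unfolding n_def by simp
    then show ?thesis
    proof
      assume h: "Suc m mod n = k"
      have "pr k = m" unfolding pr_def using h[symmetric] that(2) n0
        by (auto simp: mod_Suc split: if_splits)
      then show ?thesis by simp
    qed simp
  qed
  have v_in: "ws ! k \<in> cyc_edge ws k" "ws ! k \<in> cyc_edge ws (pr k)" if "k < n" for k
  proof -
    show "ws ! k \<in> cyc_edge ws k" using that unfolding cyc_edge_def n_def by simp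
    have "Suc (pr k) mod n = k" unfolding pr_def using that n0
      by (metis Suc_diff_1 add_gr_0 mod_Suc_eq mod_add_self2 mod_less)
    then show "ws ! k \<in> cyc_edge ws (pr k)" unfolding cyc_edge_def n_def by simp
  qed
  have inF: "cyc_edge ws k \<in> F" for k using cyc_edge_in[OF ne] ws(3) by simp
  have m0F: "\<forall>v\<in>\<Union>F. \<forall>e\<in>M0. v \<in> e \<longrightarrow> e \<in> F"
  proof (intro ballI impI)
    fix v e assume v: "v \<in> \<Union>F" and e: "e \<in> M0" "v \<in> e"
    obtain k where k: "k < n" "v = ws ! k" using vert[OF v] by blast
    have "Suc (pr k) mod n = k" unfolding pr_def using k n0
      by (metis Suc_diff_1 add_gr_0 mod_Suc_eq mod_add_self2 mod_less)
    then have "cyc_edge ws (Suc (pr k)) = cyc_edge ws k" by (intro cyc_edge_cong) (use k in \<open>simp add: n_def\<close>)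
    then have "cyc_edge ws (pr k) \<in> M0 \<or> cyc_edge ws k \<in> M0" using alt_all[of "pr k"] by auto
    then obtain e' where e': "e' \<in> M0" "v \<in> e'" "e' \<in> F" using v_in[OF k(1)] k inF by blast
    have vV: "v \<in> V" using v vert_V[of F v] F by simp
    have "\<exists>!e. e \<in> M0 \<and> v \<in> e" using pm vV unfolding perfect_matching_def by blast
    then have "e = e'" using e e' by blast
    then show "e \<in> F" using e' by simp
  qed
  have "\<exists>b. b < 2 \<and> (\<forall>N p. dual_adj FI F N \<longrightarrow> p < n \<longrightarrow> cyc_edge ws p \<in> N \<longrightarrow> p mod 2 = b)"
  proof (cases "\<exists>N. dual_adj FI F N")
    case False then show ?thesis by (intro exI[of _ 0]) simp
  next
    case True
    then obtain N0 where N0: "dual_adj FI F N0" by blast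
    then obtain e0 where e0: "e0 \<in> F" "e0 \<in> N0" unfolding dual_adj_def by auto
    then obtain p0 where p0: "p0 < n" "e0 = cyc_edge ws p0" using ws(3) unfolding cycle_edges_def n_def by auto
    have "\<forall>N p. dual_adj FI F N \<longrightarrow> p < n \<longrightarrow> cyc_edge ws p \<in> N \<longrightarrow> p mod 2 = p0 mod 2"
    proof (intro allI impI)
      fix N p assume N: "dual_adj FI F N" and p: "p < n" "cyc_edge ws p \<in> N"
      show "p mod 2 = p0 mod 2"
      proof (cases "N = N0")
        case True
        have "cyc_edge ws p = cyc_edge ws p0"
          using unique_shared[of F N0 "cyc_edge ws p" "cyc_edge ws p0"] N0 True p e0 p0 inF
          unfolding dual_adj_def by auto
        then have "p = p0" using cyc_edge_inj[OF ws(1,2)] p p0 unfolding n_def by blast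
        then show ?thesis by simp
      next
        case False
        have mem: "N0 \<in> FI" "N \<in> FI" "N0 \<noteq> F" "F \<noteq> N" using N N0 unfolding dual_adj_def by auto
        have "card {N0, F, N} = 3" using mem False by auto
        moreover have "card {N0, F, N} \<le> card FI" using mem F finFI by (intro card_mono) auto
        ultimately have "\<not> card FI \<le> 2" by simp
        then have all: "\<forall>F F' F'' e f. F \<in> FI \<longrightarrow> F' \<in> FI \<longrightarrow> F'' \<in> FI \<longrightarrow>
          F \<noteq> F' \<longrightarrow> F' \<noteq> F'' \<longrightarrow> F \<noteq> F'' \<longrightarrow>
          e \<in> F \<inter> F' \<longrightarrow> f \<in> F' \<inter> F'' \<longrightarrow> even (line_dist E e f)" using reg by simp
        have "even (line_dist E e0 (cyc_edge ws p))"
          using all[rule_format, of N0 F N e0 "cyc_edge ws p"] mem F False e0 p inF by simp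
        then have "even (cdist n ((p + (n - p0)) mod n))"
          using geodesic[OF F ws(1,2,3), of p0 p] p0 p unfolding n_def by simp
        then show ?thesis using parity_from_cdist[OF evn p0(1) p(1)] by simp
      qed
    qed
    then show ?thesis by (intro exI[of _ "p0 mod 2"]) simp
  qed
  then obtain b where b2: "b < 2" and b: "\<And>N p. dual_adj FI F N \<Longrightarrow> p < n \<Longrightarrow> cyc_edge ws p \<in> N \<Longrightarrow> p mod 2 = b" by blast
  define D where "D = {cyc_edge ws k | k. k < n \<and> k mod 2 \<noteq> b}"
  have DF: "D \<subseteq> F" unfolding D_def using inF by auto
  have uniq: "\<forall>v \<in> \<Union>F. \<exists>!e. e \<in> D \<and> v \<in> e"
  proof
    fix v assume v: "v \<in> \<Union>F"
    obtain k where k: "k < n" "v = ws ! k" using vert[OF v] by blast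
    define m0 where "m0 = (if k mod 2 \<noteq> b then k else pr k)"
    have m0: "m0 < n" "m0 mod 2 \<noteq> b" "v \<in> cyc_edge ws m0"
      unfolding m0_def using k pr_lt pr_par[OF k(1)] v_in[OF k(1)] by auto
    show "\<exists>!e. e \<in> D \<and> v \<in> e"
    proof
      show "cyc_edge ws m0 \<in> D \<and> v \<in> cyc_edge ws m0" unfolding D_def using m0 by auto
      fix e assume "e \<in> D \<and> v \<in> e"
      then obtain m where m: "m < n" "m mod 2 \<noteq> b" "e = cyc_edge ws m" "v \<in> e" unfolding D_def by auto
      have "m = k \<or> m = pr k" using at_v[OF k(1) m(1)] m k by simp
      then have "m = m0" unfolding m0_def using m(2) pr_par[OF k(1)] b2 by auto
      then show "e = cyc_edge ws m0" using m by simp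
    qed
  qed
  have links: "\<forall>N. dual_adj FI F N \<longrightarrow> link F N \<subseteq> D"
  proof (intro allI impI subsetI)
    fix N e assume N: "dual_adj FI F N" and e: "e \<in> link F N"
    have eF: "e \<in> F" and c1: "card (e \<inter> \<Union>N) = 1" using e unfolding link_def by auto
    obtain x where x: "x \<in> e" "x \<in> \<Union>N" using c1 by (metis card.empty disjoint_iff zero_neq_one)
    obtain eN where eN: "eN \<in> F" "eN \<in> N" using N unfolding dual_adj_def by auto
    obtain pN where pN: "pN < n" "eN = cyc_edge ws pN" using eN ws(3) unfolding cycle_edges_def n_def by auto
    have bN: "pN mod 2 = b" using b[OF N pN(1)] pN eN by simp
    have NF: "N \<in> FI" "F \<noteq> N" using N unfolding dual_adj_def by auto
    have xN: "x \<in> eN" using vertex_shared[of F N x eN] F NF x eF eN by blast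
    have "e \<noteq> eN"
    proof
      assume "e = eN"
      then have "e \<inter> \<Union>N = e" using eN by blast
      then have "card e = 1" using c1 by simp
      moreover have "card e = 2" using edge_card face_sub[of F] F eF by blast
      ultimately show False by simp
    qed
    obtain m where m: "m < n" "e = cyc_edge ws m" using eF ws(3) unfolding cycle_edges_def n_def by auto
    have "m = pN \<or> Suc m mod n = pN \<or> Suc pN mod n = m"
      using adj_pos[OF ws(1,2), of m pN] m pN x xN unfolding n_def by blast
    then have "m mod 2 \<noteq> pN mod 2"
    proof (elim disjE)
      assume "m = pN" then show ?thesis using \<open>e \<noteq> eN\<close> m pN by simp
    next
      assume "Suc m mod n = pN" then show ?thesis using suc_mod_parity[OF evn m(1)] by simp
    next
      assume "Suc pN mod n = m" then show ?thesis using suc_mod_parity[OF evn pN(1)] by simp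
    qed
    then show "e \<in> D" unfolding D_def using m bN by auto
  qed
  show ?thesis using DF uniq links m0F by blast
qed

end


theorem lemma4p6:
  fixes V :: "'a set" and E :: "'a set set" and FI :: "'a set set set"
    and Fo :: "'a set set" and S :: "'a set set set"
  assumes "regular_CERS V E FI Fo"
    and "resonant_set V E FI S"
  shows "\<exists>M. perfect_matching V E M \<and>
           (\<forall>F\<in>S. \<forall>F'\<in>FI. dual_adj FI F F' \<longrightarrow> M_link M F F')"
proof -
  have C: "CERS V E FI Fo" using assms(1) unfolding regular_CERS_def by simp
  interpret cers V E FI Fo using C by unfold_locales
  have reg: "card FI \<le> 2 \<or>
      (\<forall>F F' F'' e f. F \<in> FI \<longrightarrow> F' \<in> FI \<longrightarrow> F'' \<in> FI \<longrightarrow>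
          F \<noteq> F' \<longrightarrow> F' \<noteq> F'' \<longrightarrow> F \<noteq> F'' \<longrightarrow>
          e \<in> F \<inter> F' \<longrightarrow> f \<in> F' \<inter> F'' \<longrightarrow> even (line_dist E e f))"
    using assms(1) unfolding regular_CERS_def by simp
  have SFI: "S \<subseteq> FI" and disj: "\<And>C D. C \<in> S \<Longrightarrow> D \<in> S \<Longrightarrow> C \<noteq> D \<Longrightarrow> \<Union>C \<inter> \<Union>D = {}"
    using assms(2) unfolding resonant_set_def by auto
  obtain M0 where pm: "perfect_matching V E M0" and alt: "\<And>C. C \<in> S \<Longrightarrow> M_alternating M0 C"
    using assms(2) unfolding resonant_set_def by blast
  define Q where "Q F D \<longleftrightarrow> D \<subseteq> F \<and> (\<forall>v \<in> \<Union>F. \<exists>!e. e \<in> D \<and> v \<in> e) \<and>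
           (\<forall>N. dual_adj FI F N \<longrightarrow> link F N \<subseteq> D) \<and> (\<forall>v\<in>\<Union>F. \<forall>e\<in>M0. v \<in> e \<longrightarrow> e \<in> F)" for F D
  define Df where "Df F = (SOME D. Q F D)" for F
  have QD: "Q F (Df F)" if "F \<in> S" for F
  proof -
    have "\<exists>D. Q F D" unfolding Q_def using face_fix[OF reg _ pm alt[OF that]] SFI that by blast
    then show ?thesis unfolding Df_def by (rule someI_ex)
  qed
  define M where "M = (M0 - \<Union>S) \<union> \<Union>(Df ` S)"
  have M0E: "M0 \<subseteq> E" using pm unfolding perfect_matching_def by simp
  have ME: "M \<subseteq> E"
  proof -
    have "Df F \<subseteq> E" if "F \<in> S" for F using QD[OF that] face_sub[of F] SFI that unfolding Q_def by blast
    then show ?thesis unfolding M_def using M0E by blast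
  qed
  have m0u: "\<exists>!e. e \<in> M0 \<and> v \<in> e" if "v \<in> V" for v using pm that unfolding perfect_matching_def by blast
  have uniq: "\<exists>!e. e \<in> M \<and> v \<in> e" if v: "v \<in> V" for v
  proof (cases "\<exists>F\<in>S. v \<in> \<Union>F")
    case True
    then obtain F where F: "F \<in> S" "v \<in> \<Union>F" by blast
    have q: "Q F (Df F)" using QD[OF F(1)] .
    then obtain e0 where e0: "e0 \<in> Df F" "v \<in> e0" and u: "\<And>e. e \<in> Df F \<Longrightarrow> v \<in> e \<Longrightarrow> e = e0"
      unfolding Q_def using F(2) by metis
    show ?thesis
    proof
      show "e0 \<in> M \<and> v \<in> e0" unfolding M_def using e0 F by blast
      fix e assume e: "e \<in> M \<and> v \<in> e"
      show "e = e0"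
      proof (cases "e \<in> M0 - \<Union>S")
        case True
        then have "e \<in> F" using q F e unfolding Q_def by blast
        then show ?thesis using True F by blast
      next
        case False
        then obtain F' where F': "F' \<in> S" "e \<in> Df F'" using e unfolding M_def by blast
        have "e \<in> F'" using QD[OF F'(1)] F'(2) unfolding Q_def by blast
        then have "v \<in> \<Union>F'" using e by blast
        then have "F' = F" using disj[OF F'(1) F(1)] F(2) by blast
        then show ?thesis using u F' e by blast
      qed
    qed
  next
    case False
    obtain e0 where e0: "e0 \<in> M0" "v \<in> e0" using m0u[OF v] by blast
    have "e0 \<notin> \<Union>S" using False e0 by blast
    show ?thesis
    proof
      show "e0 \<in> M \<and> v \<in> e0" unfolding M_def using e0 \<open>e0 \<notin> \<Union>S\<close> by blast
      fix e assume e: "e \<in> M \<and> v \<in> e"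
      have "e \<in> M0"
      proof (rule ccontr)
        assume "e \<notin> M0"
        then obtain F' where F': "F' \<in> S" "e \<in> Df F'" using e unfolding M_def by blast
        have "e \<in> F'" using QD[OF F'(1)] F'(2) unfolding Q_def by blast
        then show False using False F' e by blast
      qed
      then show "e = e0" using m0u[OF v] e e0 by blast
    qed
  qed
  have "perfect_matching V E M" unfolding perfect_matching_def using ME uniq by blast
  moreover have "\<forall>F\<in>S. \<forall>F'\<in>FI. dual_adj FI F F' \<longrightarrow> M_link M F F'"
  proof (intro ballI impI)
    fix F F' assume F: "F \<in> S" and "F' \<in> FI" and adj: "dual_adj FI F F'"
    have "link F F' \<subseteq> Df F" using QD[OF F] adj unfolding Q_def by blast
    then show "M_link M F F'" unfolding M_link_def M_def using F by blast
  qed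
  ultimately show ?thesis by blast
qed


end
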